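(* Let $\mathcal H=(M,n,\mathcal R)$ be an MMS, $S$ a closed convex set, $x_0\in S$, and let $0<\Delta'\le\Delta$. Then $g_{\Delta',\Delta}(D_{\Delta'}\cap S)\supseteq D_\Delta\cap S$.
   Context: An MMS is a tuple $\mathcal H=(M,n,\mathcal R)$ with $M$ a finite nonempty set of modes and $\mathcal R(m)\subseteq\mathbb R^n$ finite nonempty for each mode; let $R=\bigcup_{m\in M}\mathcal R(m)$. For $\Delta>0$ let $D_\Delta=\{x_0+\Delta\sum_{r\in R}i_r r: i_r\in\mathbb N\}$. For $\Delta,\Delta'>0$ the map $g_{\Delta',\Delta}:D_{\Delta'}\to D_\Delta$ sends $x_0+\Delta'\sum_{r\in R}i_r r$ to $x_0+\Delta\sum_{r\in R}i_r r$ (this is well defined and bijective, independent of the chosen coefficients $i_r$). *)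

theory Defs
  imports "HOL-Analysis.Analysis"
begin

text \<open>An MMS (M, n, R): modes M (finite, nonempty), each mode m has a finite nonempty
  set R m of vectors in real^n; the dimension n is the finite index type 'n.\<close>
definition mms :: "'m set \<Rightarrow> ('m \<Rightarrow> (real^'n) set) \<Rightarrow> bool" where
  "mms M R \<longleftrightarrow> finite M \<and> M \<noteq> {} \<and> (\<forall>m\<in>M. finite (R m) \<and> R m \<noteq> {})"

definition all_rates :: "'m set \<Rightarrow> ('m \<Rightarrow> (real^'n) set) \<Rightarrow> (real^'n) set" where
  "all_rates M R = (\<Union>m\<in>M. R m)"

definition grid :: "'m set \<Rightarrow> ('m \<Rightarrow> (real^'n) set) \<Rightarrow> real^'n \<Rightarrow> real \<Rightarrow> (real^'n) set" where
  "grid M R x0 \<Delta> =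
     {x0 + \<Delta> *\<^sub>R (\<Sum>r\<in>all_rates M R. real (i r) *\<^sub>R r) | i :: real^'n \<Rightarrow> nat. True}"

definition grid_map :: "'m set \<Rightarrow> ('m \<Rightarrow> (real^'n) set) \<Rightarrow> real^'n \<Rightarrow> real \<Rightarrow> real \<Rightarrow> real^'n \<Rightarrow> real^'n" where
  "grid_map M R x0 \<Delta>' \<Delta> y =
     (let i = (SOME i :: real^'n \<Rightarrow> nat.
                 y = x0 + \<Delta>' *\<^sub>R (\<Sum>r\<in>all_rates M R. real (i r) *\<^sub>R r))
      in x0 + \<Delta> *\<^sub>R (\<Sum>r\<in>all_rates M R. real (i r) *\<^sub>R r))"

end

theory Submission
  imports Defs
begin

theorem lemma5:
  fixes M :: "'m set" and R :: "'m \<Rightarrow> (real^'n) set"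
    and S :: "(real^'n) set" and x0 :: "real^'n" and \<Delta> \<Delta>' :: real
  assumes "mms M R"
    and "closed S" and "convex S"
    and "x0 \<in> S"
    and "0 < \<Delta>'" and "\<Delta>' \<le> \<Delta>"
  shows "grid_map M R x0 \<Delta>' \<Delta> ` (grid M R x0 \<Delta>' \<inter> S) \<supseteq> grid M R x0 \<Delta> \<inter> S"
proof
  fix y assume y: "y \<in> grid M R x0 \<Delta> \<inter> S"
  then obtain i :: "real^'n \<Rightarrow> nat" where yi: "y = x0 + \<Delta> *\<^sub>R (\<Sum>r\<in>all_rates M R. real (i r) *\<^sub>R r)"
    unfolding grid_def by blast
  define v where "v = (\<Sum>r\<in>all_rates M R. real (i r) *\<^sub>R r)"
  define z where "z = x0 + \<Delta>' *\<^sub>R v"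
  have zg: "z \<in> grid M R x0 \<Delta>'" unfolding grid_def z_def v_def by blast
  have dpos: "\<Delta> > 0" using assms by linarith
  define t where "t = \<Delta>' / \<Delta>"
  have t01: "0 \<le> t" "t \<le> 1" using assms dpos by (auto simp: t_def)
  have "z = (1 - t) *\<^sub>R x0 + t *\<^sub>R y"
    using dpos by (simp add: z_def yi v_def[symmetric] t_def algebra_simps)
  hence zS: "z \<in> S" using assms(3,4) y t01 by (simp add: convex_alt)
  have ex: "\<exists>j :: real^'n \<Rightarrow> nat. z = x0 + \<Delta>' *\<^sub>R (\<Sum>r\<in>all_rates M R. real (j r) *\<^sub>R r)"
    unfolding z_def v_def by blast
  define j where "j = (SOME j :: real^'n \<Rightarrow> nat. z = x0 + \<Delta>' *\<^sub>R (\<Sum>r\<in>all_rates M R. real (j r) *\<^sub>R r))"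
  have "z = x0 + \<Delta>' *\<^sub>R (\<Sum>r\<in>all_rates M R. real (j r) *\<^sub>R r)"
    unfolding j_def using someI_ex[OF ex] .
  hence "\<Delta>' *\<^sub>R (\<Sum>r\<in>all_rates M R. real (j r) *\<^sub>R r) = \<Delta>' *\<^sub>R v" unfolding z_def by (metis add_left_cancel)
  hence w: "(\<Sum>r\<in>all_rates M R. real (j r) *\<^sub>R r) = v" using assms(5) by (metis less_irrefl scaleR_left_imp_eq)
  have "grid_map M R x0 \<Delta>' \<Delta> z = y"
    unfolding grid_map_def Let_def j_def[symmetric] using w yi v_def by simp
  thus "y \<in> grid_map M R x0 \<Delta>' \<Delta> ` (grid M R x0 \<Delta>' \<inter> S)" using zg zS by blast
qed

end
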